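(* For $g\ge1$ and $k,\ell\ge2$, $\mathrm{LMod}_{p_k}(S_g)\cap\mathrm{LMod}_{p_\ell}(S_g)=\mathrm{LMod}_{p_d}(S_g)$, where $d=\mathrm{lcm}(k,\ell)$.
   Context: $S_g$ is the closed orientable surface of genus $g$, $\mathrm{Mod}(S_g)$ its mapping class group. Fix simple closed curves $a_1,b_1,\dots,a_g,b_g$ whose classes form a standard symplectic basis of $H_1(S_g,\mathbb Z)$. For $m\ge2$, $p_m:S_{m(g-1)+1}\to S_g$ is the connected regular $m$-sheeted cover with deck group $\mathbb Z_m$ corresponding to the kernel of the epimorphism $\pi_1(S_g)\to\mathbb Z_m$ sending $b_1\mapsto1$ and $a_1,a_2,b_2,\dots,a_g,b_g\mapsto0$, and $\mathrm{LMod}_{p_m}(S_g)$ is the set of mapping classes of $S_g$ represented by a homeomorphism that lifts through $p_m$ to a homeomorphism of $S_{m(g-1)+1}$. *)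

theory Defs
  imports "HOL-Homology.Homology" "HOL-Algebra.Elementary_Groups"
begin

text \<open>Closed orientable surfaces are modelled as subsets of Euclidean spaces
 (every closed surface embeds in some R^n).  A closed surface: compact,
 connected, and locally homeomorphic to the plane.\<close>

definition closed_surface :: "'a::euclidean_space set \<Rightarrow> bool" where
  "closed_surface S \<longleftrightarrow> compact S \<and> connected S \<and> S \<noteq> {} \<and>
     (\<forall>x\<in>S. \<exists>U. openin (top_of_set S) U \<and> x \<in> U \<and>
                 U homeomorphic (UNIV :: (real^2) set))"

definition orientable_closed_surface :: "'a::euclidean_space set \<Rightarrow> bool" where
  "orientable_closed_surface S \<longleftrightarrow> closed_surface S \<and>
     homology_group 2 (top_of_set S) \<cong> integer_group"

definition orientation_preserving :: "'a::euclidean_space set \<Rightarrow> ('a \<Rightarrow> 'a) \<Rightarrow> bool" where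
  "orientation_preserving S f \<longleftrightarrow>
     (\<forall>c \<in> carrier (homology_group 2 (top_of_set S)).
        hom_induced 2 (top_of_set S) {} (top_of_set S) {} f c = c)"

definition homeo_of :: "'a::topological_space set \<Rightarrow> ('a \<Rightarrow> 'a) \<Rightarrow> bool" where
  "homeo_of S f \<longleftrightarrow> (\<exists>g. homeomorphism S S f g)"

definition isotopic :: "'a::topological_space set \<Rightarrow> ('a \<Rightarrow> 'a) \<Rightarrow> ('a \<Rightarrow> 'a) \<Rightarrow> bool" where
  "isotopic S f h \<longleftrightarrow>
     (\<exists>H :: real \<times> 'a \<Rightarrow> 'a. continuous_on ({0..1} \<times> S) H \<and>
        (\<forall>t\<in>{0..1}. homeo_of S (\<lambda>x. H (t, x))) \<and>
        (\<forall>x\<in>S. H (0, x) = f x) \<and> (\<forall>x\<in>S. H (1, x) = h x))"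

definition loop_in :: "'a::topological_space set \<Rightarrow> (real \<Rightarrow> 'a) \<Rightarrow> bool" where
  "loop_in S \<gamma> \<longleftrightarrow> path \<gamma> \<and> path_image \<gamma> \<subseteq> S \<and> pathstart \<gamma> = pathfinish \<gamma>"

definition simple_closed_curve :: "'a::topological_space set \<Rightarrow> (real \<Rightarrow> 'a) \<Rightarrow> bool" where
  "simple_closed_curve S \<gamma> \<longleftrightarrow> loop_in S \<gamma> \<and> simple_path \<gamma>"

definition loop_class :: "'a::topological_space set \<Rightarrow> (real \<Rightarrow> 'a) \<Rightarrow> 'a chain set" where
  "loop_class S \<gamma> =
     homologous_rel_set 1 (top_of_set S) {}
       (frag_of (restrict (\<lambda>v. \<gamma> (v 1)) (standard_simplex 1)))"

text \<open>Curves a_1,b_1,...,a_g,b_g (indices 1..g) form a standard symplectic system: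
 simple closed curves, a_i and b_i meet in exactly one point, all other pairs
 disjoint, and their homology classes form a Z-basis of H_1(S).  (Given the
 basis property, unimodularity of the intersection form forces a_i.b_i = +-1,
 so the classes form a symplectic basis up to the orientation of the b_i.)\<close>
definition standard_curve_system ::
  "'a::euclidean_space set \<Rightarrow> nat \<Rightarrow> (nat \<Rightarrow> real \<Rightarrow> 'a) \<Rightarrow> (nat \<Rightarrow> real \<Rightarrow> 'a) \<Rightarrow> bool" where
  "standard_curve_system S g a b \<longleftrightarrow>
     (\<forall>i\<in>{1..g}. simple_closed_curve S (a i) \<and> simple_closed_curve S (b i)) \<and>
     (\<forall>i\<in>{1..g}. \<exists>z. path_image (a i) \<inter> path_image (b i) = {z}) \<and>
     (\<forall>i\<in>{1..g}. \<forall>j\<in>{1..g}. i \<noteq> j \<longrightarrow>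
         path_image (a i) \<inter> path_image (a j) = {} \<and>
         path_image (b i) \<inter> path_image (b j) = {} \<and>
         path_image (a i) \<inter> path_image (b j) = {}) \<and>
     (\<forall>y \<in> carrier (homology_group 1 (top_of_set S)).
        \<exists>!(c, e). c \<in> extensional {1..g} \<and> e \<in> extensional {1..g} \<and>
          y = finprod (homology_group 1 (top_of_set S))
                (\<lambda>i. loop_class S (a i) [^]\<^bsub>homology_group 1 (top_of_set S)\<^esub> (c i :: int)
                     \<otimes>\<^bsub>homology_group 1 (top_of_set S)\<^esub>
                     loop_class S (b i) [^]\<^bsub>homology_group 1 (top_of_set S)\<^esub> (e i :: int))
                {1..g})"

text \<open>The epimorphism to Z_m sending b_1 to 1 and all other basis curves to 0
 (the target is abelian, so it factors through H_1).\<close>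
definition cover_hom ::
  "'a::euclidean_space set \<Rightarrow> nat \<Rightarrow> (nat \<Rightarrow> real \<Rightarrow> 'a) \<Rightarrow> (nat \<Rightarrow> real \<Rightarrow> 'a) \<Rightarrow> nat
     \<Rightarrow> ('a chain set \<Rightarrow> int) \<Rightarrow> bool" where
  "cover_hom S g a b m \<phi> \<longleftrightarrow>
     \<phi> \<in> hom (homology_group 1 (top_of_set S)) (integer_mod_group m) \<and>
     \<phi> (loop_class S (b 1)) = 1 \<and>
     (\<forall>i\<in>{1..g}. \<phi> (loop_class S (a i)) = 0) \<and>
     (\<forall>i\<in>{2..g}. \<phi> (loop_class S (b i)) = 0)"

text \<open>p : X \<rightarrow> S is the connected regular m-sheeted cover associated with the kernel
 of that epimorphism: X is path-connected, p is a covering map, and a loop in S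
 lifts to a closed loop in X (from any starting point) iff its class lies in the kernel.\<close>
definition is_cover_p ::
  "'a::euclidean_space set \<Rightarrow> nat \<Rightarrow> (nat \<Rightarrow> real \<Rightarrow> 'a) \<Rightarrow> (nat \<Rightarrow> real \<Rightarrow> 'a) \<Rightarrow> nat
     \<Rightarrow> 'b::euclidean_space set \<Rightarrow> ('b \<Rightarrow> 'a) \<Rightarrow> bool" where
  "is_cover_p S g a b m X p \<longleftrightarrow>
     covering_space X p S \<and> path_connected X \<and>
     (\<exists>\<phi>. cover_hom S g a b m \<phi> \<and>
        (\<forall>\<gamma> \<gamma>'. loop_in S \<gamma> \<and> path \<gamma>' \<and> path_image \<gamma>' \<subseteq> X \<and>
                  (\<forall>t\<in>{0..1}. p (\<gamma>' t) = \<gamma> t)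
               \<longrightarrow> (pathfinish \<gamma>' = pathstart \<gamma>' \<longleftrightarrow> \<phi> (loop_class S \<gamma>) = 0)))"

definition lifts_through :: "'b::topological_space set \<Rightarrow> ('b \<Rightarrow> 'a) \<Rightarrow> ('a \<Rightarrow> 'a) \<Rightarrow> bool" where
  "lifts_through X p f \<longleftrightarrow> (\<exists>F. homeo_of X F \<and> (\<forall>x\<in>X. p (F x) = f (p x)))"

text \<open>Membership of the mapping class of f in LMod_p(S): some representative
 (a homeomorphism isotopic to f) lifts through p.\<close>
definition in_LMod :: "'a::topological_space set \<Rightarrow> 'b::topological_space set \<Rightarrow> ('b \<Rightarrow> 'a)
     \<Rightarrow> ('a \<Rightarrow> 'a) \<Rightarrow> bool" where
  "in_LMod S X p f \<longleftrightarrow> (\<exists>h. homeo_of S h \<and> isotopic S f h \<and> lifts_through X p h)"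

end

theory Submission imports Defs begin

lemma loop_simplex:
  assumes "loop_in S \<gamma>"
  shows "singular_simplex 1 (top_of_set S) (restrict (\<lambda>v. \<gamma> (v 1)) (standard_simplex 1))"
proof -
  have c1: "continuous_map (subtopology (powertop_real UNIV) (standard_simplex 1)) (top_of_set {0..1}) (\<lambda>v. v 1)"
  proof -
    have "continuous_map (powertop_real UNIV) euclideanreal (\<lambda>v. v 1)"
      by (rule continuous_map_product_projection) simp
    then have "continuous_map (subtopology (powertop_real UNIV) (standard_simplex 1)) euclideanreal (\<lambda>v. v 1)"
      by (rule continuous_map_from_subtopology)
    moreover have "(\<lambda>v. v 1) ` standard_simplex 1 \<subseteq> {0..1}"
      by (auto simp: standard_simplex_def)
    ultimately show ?thesis
      by (auto simp: continuous_map_in_subtopology topspace_standard_simplex)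
  qed
  have c2: "continuous_map (top_of_set {0..1}) (top_of_set S) \<gamma>"
    using assms unfolding loop_in_def path_def path_image_def
    by (simp add: continuous_map_in_subtopology image_subset_iff)
  have "continuous_map (subtopology (powertop_real UNIV) (standard_simplex 1)) (top_of_set S) (\<gamma> \<circ> (\<lambda>v. v 1))"
    using c1 c2 continuous_map_compose by blast
  then have "continuous_map (subtopology (powertop_real UNIV) (standard_simplex 1)) (top_of_set S) (restrict (\<lambda>v. \<gamma> (v 1)) (standard_simplex 1))"
    by (rule continuous_map_eq) (auto simp: topspace_standard_simplex)
  then show ?thesis by (simp add: singular_simplex_def)
qed

lemma loop_relcycle:
  assumes "loop_in S \<gamma>"
  shows "singular_relcycle 1 (top_of_set S) {} (frag_of (restrict (\<lambda>v. \<gamma> (v 1)) (standard_simplex 1)))"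
proof -
  let ?s = "restrict (\<lambda>v. \<gamma> (v 1)) (standard_simplex 1)"
  have cl: "\<gamma> 0 = \<gamma> 1" using assms by (simp add: loop_in_def pathstart_def pathfinish_def)
  have "singular_face 1 0 ?s = singular_face 1 1 ?s"
  proof
    fix x
    show "singular_face 1 0 ?s x = singular_face 1 1 ?s x"
    proof (cases "x \<in> standard_simplex 0")
      case True
      then have x: "x = (\<lambda>j. if j = 0 then 1 else 0)" by (simp add: standard_simplex_0)
      have m0: "simplical_face 0 x \<in> standard_simplex 1"
        using simplical_face_in_standard_simplex[of 1 0 x] True by simp
      have m1: "simplical_face 1 x \<in> standard_simplex 1"
        using simplical_face_in_standard_simplex[of 1 1 x] True by simp
      show ?thesis using True m0 m1 cl
        by (simp add: singular_face_def x simplical_face_def)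
    qed (simp add: singular_face_def)
  qed
  then have "chain_boundary 1 (frag_of ?s) = 0"
    by (simp add: chain_boundary_of)
  moreover have "singular_simplex 1 (top_of_set S) ?s" by (rule loop_simplex[OF assms])
  ultimately show ?thesis
    by (simp add: singular_cycle singular_chain_of)
qed

lemma loop_class_carrier:
  assumes "loop_in S \<gamma>"
  shows "loop_class S \<gamma> \<in> carrier (homology_group 1 (top_of_set S))"
  using carrier_relative_homology_group[of 1 "top_of_set S" "{}"] loop_relcycle[OF assms]
  by (simp add: loop_class_def)

lemma loop_class_induced:
  assumes "loop_in S \<gamma>" "continuous_on S h" "h ` S \<subseteq> S"
  shows "loop_in S (h \<circ> \<gamma>)"
    and "hom_induced 1 (top_of_set S) {} (top_of_set S) {} h (loop_class S \<gamma>) = loop_class S (h \<circ> \<gamma>)"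
proof -
  show "loop_in S (h \<circ> \<gamma>)"
    using assms unfolding loop_in_def
    by (metis path_continuous_image path_image_compose pathfinish_compose pathstart_compose
        continuous_on_subset image_mono order_trans)
  have cm: "continuous_map (top_of_set S) (top_of_set S) h"
    using assms by auto
  have "hom_induced (int 1) (top_of_set S) {} (top_of_set S) {} h (loop_class S \<gamma>)
     = homologous_rel_set 1 (top_of_set S) {} (chain_map 1 h (frag_of (restrict (\<lambda>v. \<gamma> (v 1)) (standard_simplex 1))))"
    unfolding loop_class_def
    by (rule hom_induced_chain_map[OF cm _ loop_relcycle[OF assms(1)]]) simp
  also have "chain_map 1 h (frag_of (restrict (\<lambda>v. \<gamma> (v 1)) (standard_simplex 1)))
     = frag_of (restrict (\<lambda>v. (h \<circ> \<gamma>) (v 1)) (standard_simplex 1))"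
    apply (simp add: simplex_map_def)
    apply (rule arg_cong[where f=frag_of])
    apply (auto simp: fun_eq_iff)
    done
  finally show "hom_induced 1 (top_of_set S) {} (top_of_set S) {} h (loop_class S \<gamma>) = loop_class S (h \<circ> \<gamma>)"
    by (simp add: loop_class_def)
qed

lemma hom_finprod_comm:
  assumes G: "comm_group G" and K: "comm_group K" and \<psi>: "\<psi> \<in> hom G K"
    and I: "finite I" and F: "F \<in> I \<rightarrow> carrier G"
  shows "\<psi> (finprod G F I) = finprod K (\<psi> \<circ> F) I"
  using I F
proof (induction I rule: finite_induct)
  case empty
  then show ?case using G K \<psi>
    by (simp add: comm_group_def comm_monoid.finprod_empty hom_one)
next
  case (insert x I)
  have FI: "F \<in> I \<rightarrow> carrier G" "F x \<in> carrier G" using insert by auto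
  have "\<psi> (finprod G F (insert x I)) = \<psi> (F x \<otimes>\<^bsub>G\<^esub> finprod G F I)"
    using G insert FI by (simp add: comm_group_def comm_monoid.finprod_insert)
  also have "\<dots> = \<psi> (F x) \<otimes>\<^bsub>K\<^esub> \<psi> (finprod G F I)"
    using G FI \<psi> by (simp add: hom_mult comm_group_def comm_monoid.finprod_closed)
  also have "\<dots> = \<psi> (F x) \<otimes>\<^bsub>K\<^esub> finprod K (\<psi> \<circ> F) I"
    using insert FI by (simp add: o_def)
  also have "\<dots> = finprod K (\<psi> \<circ> F) (insert x I)"
  proof -
    have PF: "\<psi> \<circ> F \<in> insert x I \<rightarrow> carrier K"
      using insert.prems \<psi> hom_in_carrier by fastforce
    have "comm_monoid K" using K by (simp add: comm_group_def)
    from comm_monoid.finprod_insert[OF this insert.hyps(1,2), of "\<psi> \<circ> F"] PF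
    show ?thesis by auto
  qed
  finally show ?case .
qed

lemma gen_unique:
  fixes S :: "'a::euclidean_space set"
  assumes scs: "standard_curve_system S g a b"
    and cls: "\<And>i. i \<in> {1..g} \<Longrightarrow> loop_class S (a i) \<in> carrier (homology_group 1 (top_of_set S))
                    \<and> loop_class S (b i) \<in> carrier (homology_group 1 (top_of_set S))"
    and K: "comm_group K"
    and h1: "\<psi>1 \<in> hom (homology_group 1 (top_of_set S)) K"
    and h2: "\<psi>2 \<in> hom (homology_group 1 (top_of_set S)) K"
    and ea: "\<And>i. i \<in> {1..g} \<Longrightarrow> \<psi>1 (loop_class S (a i)) = \<psi>2 (loop_class S (a i))"
    and eb: "\<And>i. i \<in> {1..g} \<Longrightarrow> \<psi>1 (loop_class S (b i)) = \<psi>2 (loop_class S (b i))"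
    and x: "x \<in> carrier (homology_group 1 (top_of_set S))"
  shows "\<psi>1 x = \<psi>2 x"
proof -
  let ?H = "homology_group 1 (top_of_set S)"
  have HG: "comm_group ?H" by (rule abelian_homology_group)
  then have Hg: "group ?H" by (simp add: comm_group_def)
  have Kg: "group K" using K by (simp add: comm_group_def)
  obtain c e where xe: "x = finprod ?H
                (\<lambda>i. loop_class S (a i) [^]\<^bsub>?H\<^esub> (c i :: int) \<otimes>\<^bsub>?H\<^esub>
                     loop_class S (b i) [^]\<^bsub>?H\<^esub> (e i :: int)) {1..g}"
    using scs x unfolding standard_curve_system_def by fast
  define F where "F = (\<lambda>i. loop_class S (a i) [^]\<^bsub>?H\<^esub> (c i :: int) \<otimes>\<^bsub>?H\<^esub>
                     loop_class S (b i) [^]\<^bsub>?H\<^esub> (e i :: int))"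
  have F: "F \<in> {1..g} \<rightarrow> carrier ?H"
    using cls Hg by (auto simp: F_def intro!: group.int_pow_closed monoid.m_closed group.is_monoid)
  have "\<psi>1 x = finprod K (\<psi>1 \<circ> F) {1..g}"
    using hom_finprod_comm[OF HG K h1 _ F] xe F_def by simp
  also have "\<dots> = finprod K (\<psi>2 \<circ> F) {1..g}"
  proof (rule comm_monoid.finprod_cong')
    show "comm_monoid K" using K by (simp add: comm_group_def)
    show "\<psi>2 \<circ> F \<in> {1..g} \<rightarrow> carrier K" using F h2 hom_in_carrier by fastforce
    fix i assume i: "i \<in> {1..g}"
    have ab: "loop_class S (a i) [^]\<^bsub>?H\<^esub> (c i) \<in> carrier ?H" "loop_class S (b i) [^]\<^bsub>?H\<^esub> (e i) \<in> carrier ?H"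
      using cls[OF i] Hg by (auto intro: group.int_pow_closed)
    show "(\<psi>1 \<circ> F) i = (\<psi>2 \<circ> F) i"
      using ab cls[OF i] ea[OF i] eb[OF i] h1 h2 Hg Kg
      by (simp add: F_def hom_mult hom_int_pow)
  qed simp
  also have "\<dots> = \<psi>2 x"
    using hom_finprod_comm[OF HG K h2 _ F] xe F_def by simp
  finally show ?thesis .
qed

lemma locally_from_local:
  assumes "\<And>x. x \<in> S \<Longrightarrow> \<exists>U. openin (top_of_set S) U \<and> x \<in> U \<and> locally P U"
  shows "locally P S"
proof (rule locallyI)
  fix w x assume w: "openin (top_of_set S) w" and x: "x \<in> w"
  then have "x \<in> S" using openin_imp_subset by blast
  then obtain U where U: "openin (top_of_set S) U" "x \<in> U" "locally P U" using assms by blast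
  have "openin (top_of_set U) (w \<inter> U)"
    using w U(1) by (metis inf_commute openin_imp_subset openin_subtopology_Int2 inf.absorb_iff2 openin_Int openin_subset_trans inf_le2)
  then obtain U' V where "openin (top_of_set U) U'" "P V" "x \<in> U'" "U' \<subseteq> V" "V \<subseteq> w \<inter> U"
    using locallyE[OF U(3)] x U(2) by (metis IntI)
  moreover have "openin (top_of_set S) U'"
    using calculation(1) U(1) openin_trans by blast
  ultimately show "\<exists>U V. openin (top_of_set S) U \<and> P V \<and> x \<in> U \<and> U \<subseteq> V \<and> V \<subseteq> w"
    by blast
qed

lemma surface_lpc:
  fixes S :: "'a::euclidean_space set"
  assumes "closed_surface S"
  shows "locally path_connected S"
proof (rule locally_from_local)
  fix x assume "x \<in> S"
  then obtain U where U: "openin (top_of_set S) U" "x \<in> U" "U homeomorphic (UNIV :: (real^2) set)"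
    using assms unfolding closed_surface_def by blast
  have "locally path_connected U"
    using homeomorphic_locally[OF U(3), of path_connected path_connected]
      homeomorphic_path_connectedness locally_path_connected_UNIV by blast
  then show "\<exists>U. openin (top_of_set S) U \<and> x \<in> U \<and> locally path_connected U"
    using U by blast
qed

lemma isotopic_hom_eq:
  fixes S :: "'a::euclidean_space set"
  assumes "isotopic S f h"
  shows "hom_induced p (top_of_set S) {} (top_of_set S) {} f = hom_induced p (top_of_set S) {} (top_of_set S) {} h"
proof -
  obtain H :: "real \<times> 'a \<Rightarrow> 'a" where Hc: "continuous_on ({0..1} \<times> S) H"
    and Hh: "\<forall>t\<in>{0..1}. homeo_of S (\<lambda>x. H (t, x))"
    and H0: "\<forall>x\<in>S. H (0, x) = f x" and H1: "\<forall>x\<in>S. H (1, x) = h x"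
    using assms unfolding isotopic_def by blast
  have Him: "H \<in> {0..1::real} \<times> S \<rightarrow> S"
  proof
    fix z :: "real \<times> 'a" assume "z \<in> {0..1} \<times> S"
    then obtain t :: real and x where z: "z = (t, x)" "t \<in> {0..1}" "x \<in> S" by blast
    then obtain k where "homeomorphism S S (\<lambda>x. H (t, x)) k" using Hh unfolding homeo_of_def by blast
    then have "(\<lambda>x. H (t, x)) ` S = S" by (simp add: homeomorphism_def)
    then show "H z \<in> S" using z by blast
  qed
  have "homotopic_with (\<lambda>_. True) (top_of_set S) (top_of_set S) (\<lambda>x. H (0, x)) (\<lambda>x. H (1, x))"
    unfolding homotopic_with_def
    by (rule exI[of _ H]) (simp add: Hc Him)
  then have "hom_induced p (top_of_set S) {} (top_of_set S) {} (\<lambda>x. H (0, x)) = hom_induced p (top_of_set S) {} (top_of_set S) {} (\<lambda>x. H (1, x))"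
    by (rule homology_homotopy_empty)
  moreover have "hom_induced p (top_of_set S) {} (top_of_set S) {} (\<lambda>x. H (0, x)) = hom_induced p (top_of_set S) {} (top_of_set S) {} f"
    by (rule hom_induced_eq) (simp add: H0)
  moreover have "hom_induced p (top_of_set S) {} (top_of_set S) {} (\<lambda>x. H (1, x)) = hom_induced p (top_of_set S) {} (top_of_set S) {} h"
    by (rule hom_induced_eq) (simp add: H1)
  ultimately show ?thesis by simp
qed

lemma mult_mod_hom:
  assumes "\<phi> \<in> hom G (integer_mod_group m)" "m > 0"
  shows "(\<lambda>x. (c * \<phi> x) mod int m) \<in> hom G (integer_mod_group m)"
proof -
  have m: "\<And>x y. x \<in> carrier G \<Longrightarrow> y \<in> carrier G \<Longrightarrow> \<phi> (x \<otimes>\<^bsub>G\<^esub> y) = (\<phi> x + \<phi> y) mod int m"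
    using assms(1) by (simp add: hom_def)
  show ?thesis
    using assms(2) unfolding hom_def
    by (auto simp: carrier_integer_mod_group m mod_mult_right_eq mod_add_eq distrib_left)
qed

lemma red_mod_hom:
  assumes "\<phi> \<in> hom G (integer_mod_group d)" "d > 0" "k > 0" "k dvd d"
  shows "(\<lambda>x. \<phi> x mod int k) \<in> hom G (integer_mod_group k)"
proof -
  have m: "\<And>x y. x \<in> carrier G \<Longrightarrow> y \<in> carrier G \<Longrightarrow> \<phi> (x \<otimes>\<^bsub>G\<^esub> y) = (\<phi> x + \<phi> y) mod int d"
    using assms(1) by (simp add: hom_def)
  have kd: "int k dvd int d" using assms(4) by simp
  show ?thesis
    using assms(2,3) unfolding hom_def
    by (auto simp: carrier_integer_mod_group m mod_mod_cancel[OF kd] mod_add_eq)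
qed

lemma scs_loops:
  assumes "standard_curve_system S g a b" "i \<in> {1..g}"
  shows "loop_in S (a i)" "loop_in S (b i)"
  using assms unfolding standard_curve_system_def simple_closed_curve_def by auto

lemma cover_hom_carrier:
  assumes "cover_hom S g a b m \<phi>" "x \<in> carrier (homology_group 1 (top_of_set S))" "m > 0"
  shows "0 \<le> \<phi> x" "\<phi> x < int m"
  using assms hom_in_carrier[of \<phi> _ "integer_mod_group m" x]
  unfolding cover_hom_def by (auto simp: carrier_integer_mod_group)

lemma scale_form:
  fixes S :: "'a::euclidean_space set"
  assumes scs: "standard_curve_system S g a b" and cv: "cover_hom S g a b m \<phi>" and m: "m \<ge> 2" and g: "g \<ge> 1"
    and za: "\<And>i. i \<in> {1..g} \<Longrightarrow> \<phi> (hom_induced 1 (top_of_set S) {} (top_of_set S) {} h (loop_class S (a i))) = 0"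
    and zb: "\<And>i. i \<in> {2..g} \<Longrightarrow> \<phi> (hom_induced 1 (top_of_set S) {} (top_of_set S) {} h (loop_class S (b i))) = 0"
    and x: "x \<in> carrier (homology_group 1 (top_of_set S))"
  shows "\<phi> (hom_induced 1 (top_of_set S) {} (top_of_set S) {} h x)
       = (\<phi> (hom_induced 1 (top_of_set S) {} (top_of_set S) {} h (loop_class S (b 1))) * \<phi> x) mod int m"
proof -
  let ?H = "homology_group 1 (top_of_set S)"
  let ?h = "hom_induced 1 (top_of_set S) {} (top_of_set S) {} h"
  let ?c = "\<phi> (?h (loop_class S (b 1)))"
  have ph: "\<phi> \<in> hom ?H (integer_mod_group m)" using cv by (simp add: cover_hom_def)
  have hh: "?h \<in> hom ?H ?H" by (rule hom_induced_hom)
  have h1: "\<phi> \<circ> ?h \<in> hom ?H (integer_mod_group m)"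
    using hh ph by (rule hom_compose)
  have h2: "(\<lambda>x. (?c * \<phi> x) mod int m) \<in> hom ?H (integer_mod_group m)"
    using ph m by (intro mult_mod_hom) auto
  have cls: "\<And>i. i \<in> {1..g} \<Longrightarrow> loop_class S (a i) \<in> carrier ?H \<and> loop_class S (b i) \<in> carrier ?H"
    using scs_loops[OF scs] loop_class_carrier by blast
  have b1: "?h (loop_class S (b 1)) \<in> carrier ?H"
    using hom_in_carrier[OF hh] cls[of 1] g by auto
  have cc: "0 \<le> ?c" "?c < int m"
    using cover_hom_carrier[OF cv b1] m by auto
  have "(\<phi> \<circ> ?h) x = (\<lambda>x. (?c * \<phi> x) mod int m) x"
  proof (rule gen_unique[OF scs cls _ h1 h2 _ _ x])
    show "comm_group (integer_mod_group m)" by simp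
  next
    fix i assume i: "i \<in> {1..g}"
    show "(\<phi> \<circ> ?h) (loop_class S (a i)) = (\<lambda>x. (?c * \<phi> x) mod int m) (loop_class S (a i))"
      using za[OF i] cv i by (simp add: cover_hom_def)
    show "(\<phi> \<circ> ?h) (loop_class S (b i)) = (\<lambda>x. (?c * \<phi> x) mod int m) (loop_class S (b i))"
    proof (cases "i = 1")
      case True
      then show ?thesis using cv cc by (simp add: cover_hom_def)
    next
      case False
      then have "i \<in> {2..g}" using i by auto
      then show ?thesis using zb cv by (simp add: cover_hom_def)
    qed
  qed
  then show ?thesis by simp
qed

definition crit :: "'a::euclidean_space set \<Rightarrow> ('a chain set \<Rightarrow> int) \<Rightarrow> ('a \<Rightarrow> 'a) \<Rightarrow> bool" where
  "crit S \<phi> h \<longleftrightarrow> (\<forall>x\<in>carrier (homology_group 1 (top_of_set S)). \<phi> x = 0 \<longrightarrow>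
      \<phi> (hom_induced 1 (top_of_set S) {} (top_of_set S) {} h x) = 0)"

lemma red_eq:
  fixes S :: "'a::euclidean_space set"
  assumes scs: "standard_curve_system S g a b" and ck: "cover_hom S g a b k \<phi>k"
    and cd: "cover_hom S g a b d \<phi>d" and kd: "k dvd d" and k: "k \<ge> 2" and d: "d > 0"
    and x: "x \<in> carrier (homology_group 1 (top_of_set S))"
  shows "\<phi>k x = \<phi>d x mod int k"
proof -
  let ?H = "homology_group 1 (top_of_set S)"
  have cls: "\<And>i. i \<in> {1..g} \<Longrightarrow> loop_class S (a i) \<in> carrier ?H \<and> loop_class S (b i) \<in> carrier ?H"
    using scs_loops[OF scs] loop_class_carrier by blast
  have h1: "\<phi>k \<in> hom ?H (integer_mod_group k)" using ck by (simp add: cover_hom_def)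
  have h2: "(\<lambda>x. \<phi>d x mod int k) \<in> hom ?H (integer_mod_group k)"
    using cd kd k d by (intro red_mod_hom) (auto simp: cover_hom_def)
  show ?thesis
  proof (rule gen_unique[OF scs cls _ h1 h2 _ _ x])
    show "comm_group (integer_mod_group k)" by simp
  next
    fix i assume i: "i \<in> {1..g}"
    show "\<phi>k (loop_class S (a i)) = \<phi>d (loop_class S (a i)) mod int k"
      using ck cd i by (simp add: cover_hom_def)
    show "\<phi>k (loop_class S (b i)) = \<phi>d (loop_class S (b i)) mod int k"
    proof (cases "i = 1")
      case True
      then show ?thesis using ck cd k by (simp add: cover_hom_def)
    next
      case False
      then have "i \<in> {2..g}" using i by auto
      then show ?thesis using ck cd by (simp add: cover_hom_def)
    qed
  qed
qed

lemma crit_scale: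
  fixes S :: "'a::euclidean_space set"
  assumes scs: "standard_curve_system S g a b" and cv: "cover_hom S g a b m \<phi>" and m: "m \<ge> 2" and g: "g \<ge> 1"
    and cr: "crit S \<phi> h"
    and x: "x \<in> carrier (homology_group 1 (top_of_set S))"
  shows "\<phi> (hom_induced 1 (top_of_set S) {} (top_of_set S) {} h x)
       = (\<phi> (hom_induced 1 (top_of_set S) {} (top_of_set S) {} h (loop_class S (b 1))) * \<phi> x) mod int m"
proof (rule scale_form[OF scs cv m g _ _ x])
  fix i assume i: "i \<in> {1..g}"
  have "loop_class S (a i) \<in> carrier (homology_group 1 (top_of_set S))"
    by (rule loop_class_carrier[OF scs_loops(1)[OF scs i]])
  moreover have "\<phi> (loop_class S (a i)) = 0" using cv i by (simp add: cover_hom_def)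
  ultimately show "\<phi> (hom_induced 1 (top_of_set S) {} (top_of_set S) {} h (loop_class S (a i))) = 0"
    using cr by (simp add: crit_def)
next
  fix i assume i: "i \<in> {2..g}"
  then have i1: "i \<in> {1..g}" by auto
  have "loop_class S (b i) \<in> carrier (homology_group 1 (top_of_set S))"
    by (rule loop_class_carrier[OF scs_loops(2)[OF scs i1]])
  moreover have "\<phi> (loop_class S (b i)) = 0" using cv i by (simp add: cover_hom_def)
  ultimately show "\<phi> (hom_induced 1 (top_of_set S) {} (top_of_set S) {} h (loop_class S (b i))) = 0"
    using cr by (simp add: crit_def)
qed

lemma crit_down:
  fixes S :: "'a::euclidean_space set"
  assumes scs: "standard_curve_system S g a b" and ck: "cover_hom S g a b k \<phi>k"
    and cd: "cover_hom S g a b d \<phi>d" and kd: "k dvd d" and k: "k \<ge> 2" and d: "d \<ge> 2" and g: "g \<ge> 1"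
    and cr: "crit S \<phi>d h"
  shows "crit S \<phi>k h"
  unfolding crit_def
proof (intro ballI impI)
  let ?H = "homology_group 1 (top_of_set S)"
  let ?h = "hom_induced 1 (top_of_set S) {} (top_of_set S) {} h"
  fix x assume x: "x \<in> carrier ?H" and z: "\<phi>k x = 0"
  have hx: "?h x \<in> carrier ?H" using hom_in_carrier[OF hom_induced_hom] x by blast
  have "\<phi>k x = \<phi>d x mod int k" using red_eq[OF scs ck cd kd k _ x] d by simp
  then have kdv: "int k dvd \<phi>d x" using z by auto
  have "\<phi>k (?h x) = \<phi>d (?h x) mod int k" using red_eq[OF scs ck cd kd k _ hx] d by simp
  also have "\<dots> = ((\<phi>d (?h (loop_class S (b 1))) * \<phi>d x) mod int d) mod int k"
    using crit_scale[OF scs cd d g cr x] by simp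
  also have "\<dots> = (\<phi>d (?h (loop_class S (b 1))) * \<phi>d x) mod int k"
    using kd by (simp add: mod_mod_cancel)
  also have "\<dots> = 0" using kdv by simp
  finally show "\<phi>k (?h x) = 0" .
qed

lemma crit_up:
  fixes S :: "'a::euclidean_space set"
  assumes scs: "standard_curve_system S g a b" and ck: "cover_hom S g a b k \<phi>k"
    and cl: "cover_hom S g a b l \<phi>l"
    and cd: "cover_hom S g a b (lcm k l) \<phi>d" and k: "k \<ge> 2" and l: "l \<ge> 2"
    and crk: "crit S \<phi>k h" and crl: "crit S \<phi>l h"
  shows "crit S \<phi>d h"
  unfolding crit_def
proof (intro ballI impI)
  let ?H = "homology_group 1 (top_of_set S)"
  let ?h = "hom_induced 1 (top_of_set S) {} (top_of_set S) {} h"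
  fix x assume x: "x \<in> carrier ?H" and z: "\<phi>d x = 0"
  have d: "lcm k l > 0" using k l by (simp add: lcm_pos_nat)
  have hx: "?h x \<in> carrier ?H" using hom_in_carrier[OF hom_induced_hom] x by blast
  have "\<phi>k x = 0" using red_eq[OF scs ck cd _ k d x] z by simp
  then have "\<phi>k (?h x) = 0" using crk x by (simp add: crit_def)
  then have "int k dvd \<phi>d (?h x)" using red_eq[OF scs ck cd _ k d hx] by auto
  moreover
  have "\<phi>l x = 0" using red_eq[OF scs cl cd _ l d x] z by simp
  then have "\<phi>l (?h x) = 0" using crl x by (simp add: crit_def)
  then have "int l dvd \<phi>d (?h x)" using red_eq[OF scs cl cd _ l d hx] by auto
  ultimately have "int (lcm k l) dvd \<phi>d (?h x)"
    by (metis lcm_least int_ops(8) lcm_int_def int_dvd_int_iff lcm_least_iff lcm_int_int_eq)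
  moreover have "0 \<le> \<phi>d (?h x)" "\<phi>d (?h x) < int (lcm k l)"
    using cover_hom_carrier[OF cd hx d] by auto
  ultimately show "\<phi>d (?h x) = 0"
    by (metis order_le_less zdvd_not_zless)
qed

lemma arith_unit:
  fixes c u v m :: int
  assumes "(c * v) mod m = 1" "(c * u) mod m = 0" "0 \<le> u" "u < m"
  shows "u = 0"
proof -
  have "u mod m = (u * ((c * v) mod m)) mod m" using assms(1) by simp
  also have "\<dots> = ((c * u) * v) mod m" by (simp add: mod_mult_right_eq ac_simps)
  also have "\<dots> = (((c * u) mod m) * v) mod m" by (simp add: mod_mult_left_eq)
  also have "\<dots> = 0" using assms(2) by simp
  finally show ?thesis using assms(3,4) by simp
qed

lemma hs_inverse:
  fixes S :: "'a::euclidean_space set"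
  assumes hm: "homeomorphism S S h h'" and y: "y \<in> carrier (homology_group p (top_of_set S))"
  shows "hom_induced p (top_of_set S) {} (top_of_set S) {} h (hom_induced p (top_of_set S) {} (top_of_set S) {} h' y) = y"
proof -
  have c1: "continuous_map (top_of_set S) (top_of_set S) h" and c2: "continuous_map (top_of_set S) (top_of_set S) h'"
    using hm by (auto simp: homeomorphism_def)
  have "hom_induced p (top_of_set S) {} (top_of_set S) {} h (hom_induced p (top_of_set S) {} (top_of_set S) {} h' y)
      = hom_induced p (top_of_set S) {} (top_of_set S) {} (h \<circ> h') y"
    by (rule hom_induced_compose'[OF c2 _ c1]) auto
  also have "\<dots> = y"
  proof (rule hom_induced_id_gen[OF _ _ y])
    show "continuous_map (top_of_set S) (top_of_set S) (h \<circ> h')" using c1 c2 continuous_map_compose by blast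
    show "\<And>x. x \<in> topspace (top_of_set S) \<Longrightarrow> (h \<circ> h') x = x" using hm by (simp add: homeomorphism_def)
  qed
  finally show ?thesis .
qed

lemma crit_inv:
  fixes S :: "'a::euclidean_space set"
  assumes scs: "standard_curve_system S g a b" and cv: "cover_hom S g a b m \<phi>" and m: "m \<ge> 2" and g: "g \<ge> 1"
    and hm: "homeomorphism S S h h'" and cr: "crit S \<phi> h"
  shows "crit S \<phi> h'"
  unfolding crit_def
proof (intro ballI impI)
  let ?H = "homology_group 1 (top_of_set S)"
  let ?h = "hom_induced 1 (top_of_set S) {} (top_of_set S) {} h"
  let ?h' = "hom_induced 1 (top_of_set S) {} (top_of_set S) {} h'"
  let ?c = "\<phi> (?h (loop_class S (b 1)))"
  fix x assume x: "x \<in> carrier ?H" and z: "\<phi> x = 0"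
  have b1: "loop_class S (b 1) \<in> carrier ?H"
    using loop_class_carrier[OF scs_loops(2)[OF scs]] g by auto
  have y0: "?h' (loop_class S (b 1)) \<in> carrier ?H" using hom_in_carrier[OF hom_induced_hom] b1 by blast
  have zz: "?h' x \<in> carrier ?H" using hom_in_carrier[OF hom_induced_hom] x by blast
  have "1 = \<phi> (loop_class S (b 1))" using cv by (simp add: cover_hom_def)
  also have "\<dots> = \<phi> (?h (?h' (loop_class S (b 1))))" using hs_inverse[OF hm b1] by simp
  also have "\<dots> = (?c * \<phi> (?h' (loop_class S (b 1)))) mod int m"
    by (rule crit_scale[OF scs cv m g cr y0])
  finally have e1: "(?c * \<phi> (?h' (loop_class S (b 1)))) mod int m = 1" by simp
  have "0 = \<phi> (?h (?h' x))" using hs_inverse[OF hm x] z by simp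
  also have "\<dots> = (?c * \<phi> (?h' x)) mod int m"
    by (rule crit_scale[OF scs cv m g cr zz])
  finally have e2: "(?c * \<phi> (?h' x)) mod int m = 0" by simp
  show "\<phi> (?h' x) = 0"
    using arith_unit[OF e1 e2] cover_hom_carrier[OF cv zz] m by auto
qed

definition lift_prop :: "'a::euclidean_space set \<Rightarrow> 'b::euclidean_space set \<Rightarrow> ('b \<Rightarrow> 'a) \<Rightarrow> ('a chain set \<Rightarrow> int) \<Rightarrow> bool" where
  "lift_prop S X p \<phi> \<longleftrightarrow> (\<forall>\<gamma> \<gamma>'. loop_in S \<gamma> \<and> path \<gamma>' \<and> path_image \<gamma>' \<subseteq> X \<and>
                  (\<forall>t\<in>{0..1}. p (\<gamma>' t) = \<gamma> t)
               \<longrightarrow> (pathfinish \<gamma>' = pathstart \<gamma>' \<longleftrightarrow> \<phi> (loop_class S \<gamma>) = 0))"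

lemma lift_propD:
  assumes "lift_prop S X p \<phi>" "loop_in S \<gamma>" "path \<gamma>'" "path_image \<gamma>' \<subseteq> X"
    "\<And>t. t \<in> {0..1} \<Longrightarrow> p (\<gamma>' t) = \<gamma> t"
  shows "pathfinish \<gamma>' = pathstart \<gamma>' \<longleftrightarrow> \<phi> (loop_class S \<gamma>) = 0"
  using assms unfolding lift_prop_def by blast

lemma lift_zero:
  fixes S :: "'a::euclidean_space set" and X :: "'b::euclidean_space set"
  assumes cov: "covering_space X p S" and LP: "lift_prop S X p \<phi>"
    and F: "homeo_of X F" and pF: "\<And>x. x \<in> X \<Longrightarrow> p (F x) = h (p x)"
    and hc: "continuous_on S h" "h ` S \<subseteq> S"
    and \<gamma>: "loop_in S \<gamma>" and z: "\<phi> (loop_class S \<gamma>) = 0"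
  shows "\<phi> (loop_class S (h \<circ> \<gamma>)) = 0"
proof -
  have "pathstart \<gamma> \<in> S" using \<gamma> unfolding loop_in_def
    using pathstart_in_path_image by blast
  then have "pathstart \<gamma> \<in> p ` X" using covering_space_imp_surjective[OF cov] by simp
  then obtain x0 where x0: "x0 \<in> X" "p x0 = pathstart \<gamma>" by (metis imageE)
  have pg: "path \<gamma>" "path_image \<gamma> \<subseteq> S" using \<gamma> by (auto simp: loop_in_def)
  obtain \<gamma>' where g': "path \<gamma>'" "path_image \<gamma>' \<subseteq> X" "pathstart \<gamma>' = x0"
      and pg': "\<And>t. t \<in> {0..1} \<Longrightarrow> p (\<gamma>' t) = \<gamma> t"
    by (rule covering_space_lift_path_strong[OF cov x0(1) pg x0(2)[symmetric]]) blast
  have cl: "pathfinish \<gamma>' = pathstart \<gamma>'"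
    using lift_propD[OF LP \<gamma> g'(1,2) pg'] z by simp
  obtain F' where hF: "homeomorphism X X F F'" using F unfolding homeo_of_def by blast
  have Fc: "continuous_on X F" and FX: "F ` X = X" using hF by (auto simp: homeomorphism_def)
  have d1: "path (F \<circ> \<gamma>')"
    using g'(1) continuous_on_subset[OF Fc g'(2)] by (rule path_continuous_image)
  have d2: "path_image (F \<circ> \<gamma>') \<subseteq> X"
    using g' FX unfolding path_image_compose by blast
  have d3: "p ((F \<circ> \<gamma>') t) = (h \<circ> \<gamma>) t" if t: "t \<in> {0..1}" for t
  proof -
    have "\<gamma>' t \<in> X" using g' t by (auto simp: path_image_def)
    then show "p ((F \<circ> \<gamma>') t) = (h \<circ> \<gamma>) t" using pF pg' t by simp
  qed
  have d4: "pathfinish (F \<circ> \<gamma>') = pathstart (F \<circ> \<gamma>')"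
    using cl by (simp add: pathfinish_compose pathstart_compose)
  have lh: "loop_in S (h \<circ> \<gamma>)" by (rule loop_class_induced(1)[OF \<gamma> hc])
  show ?thesis
    using lift_propD[OF LP lh d1 d2 d3] d4 by blast
qed

lemma crit_of_lift:
  fixes S :: "'a::euclidean_space set" and X :: "'b::euclidean_space set"
  assumes scs: "standard_curve_system S g a b" and cv: "cover_hom S g a b m \<phi>" and m: "m \<ge> 2" and g: "g \<ge> 1"
    and cov: "covering_space X p S" and LP: "lift_prop S X p \<phi>"
    and hc: "continuous_on S h" "h ` S \<subseteq> S"
    and lt: "lifts_through X p h"
  shows "crit S \<phi> h"
  unfolding crit_def
proof (intro ballI impI)
  obtain F where F: "homeo_of X F" and pF: "\<And>x. x \<in> X \<Longrightarrow> p (F x) = h (p x)"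
    using lt unfolding lifts_through_def by blast
  fix x assume x: "x \<in> carrier (homology_group 1 (top_of_set S))" and z: "\<phi> x = 0"
  have "\<phi> (hom_induced 1 (top_of_set S) {} (top_of_set S) {} h x)
       = (\<phi> (hom_induced 1 (top_of_set S) {} (top_of_set S) {} h (loop_class S (b 1))) * \<phi> x) mod int m"
  proof (rule scale_form[OF scs cv m g _ _ x])
    fix i assume i: "i \<in> {1..g}"
    have l: "loop_in S (a i)" by (rule scs_loops(1)[OF scs i])
    have "\<phi> (loop_class S (a i)) = 0" using cv i by (simp add: cover_hom_def)
    then show "\<phi> (hom_induced 1 (top_of_set S) {} (top_of_set S) {} h (loop_class S (a i))) = 0"
      using lift_zero[OF cov LP F pF hc l] loop_class_induced(2)[OF l hc] by simp
  next
    fix i assume i: "i \<in> {2..g}"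
    then have i1: "i \<in> {1..g}" by auto
    have l: "loop_in S (b i)" by (rule scs_loops(2)[OF scs i1])
    have "\<phi> (loop_class S (b i)) = 0" using cv i by (simp add: cover_hom_def)
    then show "\<phi> (hom_induced 1 (top_of_set S) {} (top_of_set S) {} h (loop_class S (b i))) = 0"
      using lift_zero[OF cov LP F pF hc l] loop_class_induced(2)[OF l hc] by simp
  qed
  then show "\<phi> (hom_induced 1 (top_of_set S) {} (top_of_set S) {} h x) = 0" using z by simp
qed

lemma one_lift:
  fixes S :: "'a::euclidean_space set" and X :: "'b::euclidean_space set"
  assumes cov: "covering_space X p S" and pc: "path_connected X" and lpc: "locally path_connected X"
    and LP: "lift_prop S X p \<phi>"
    and hc: "continuous_on S h" "h ` S \<subseteq> S" and cr: "crit S \<phi> h"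
    and z: "z \<in> X" and a: "a \<in> X" and pa: "p a = h (p z)"
  obtains F where "continuous_on X F" "F \<in> X \<rightarrow> X" "F z = a" "\<And>y. y \<in> X \<Longrightarrow> p (F y) = h (p y)"
proof -
  have pc': "continuous_on X p" by (rule covering_space_imp_continuous[OF cov])
  have pX: "p ` X = S" by (rule covering_space_imp_surjective[OF cov])
  have contf: "continuous_on X (h \<circ> p)"
    using pc' hc(1) pX by (metis continuous_on_compose)
  have fim: "h \<circ> p \<in> X \<rightarrow> S" using pX hc(2) by auto
  have feq: "(h \<circ> p) z = p a" using pa by simp
  have hom: "\<exists>q. path q \<and> path_image q \<subseteq> X \<and> pathstart q = a \<and> pathfinish q = a \<and>
                 homotopic_paths S ((h \<circ> p) \<circ> r) (p \<circ> q)"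
    if r: "path r" "path_image r \<subseteq> X" "pathstart r = z" "pathfinish r = z" for r
  proof -
    have l1: "loop_in S (p \<circ> r)"
      unfolding loop_in_def
    proof (intro conjI)
      show "path (p \<circ> r)" using r(1) continuous_on_subset[OF pc' r(2)] by (rule path_continuous_image)
      show "path_image (p \<circ> r) \<subseteq> S" using r(2) pX unfolding path_image_compose by blast
      show "pathstart (p \<circ> r) = pathfinish (p \<circ> r)" using r(3,4) by (simp add: pathstart_compose pathfinish_compose)
    qed
    have rr: "p (r t) = (p \<circ> r) t" if "t \<in> {0..1}" for t by simp
    have "\<phi> (loop_class S (p \<circ> r)) = 0"
    proof -
      have "pathfinish r = pathstart r" using r(3,4) by simp
      then show ?thesis using lift_propD[OF LP l1 r(1,2) rr] by blast
    qed
    moreover have "loop_class S (p \<circ> r) \<in> carrier (homology_group 1 (top_of_set S))"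
      by (rule loop_class_carrier[OF l1])
    ultimately have "\<phi> (hom_induced 1 (top_of_set S) {} (top_of_set S) {} h (loop_class S (p \<circ> r))) = 0"
      using cr by (simp add: crit_def)
    then have z2: "\<phi> (loop_class S (h \<circ> (p \<circ> r))) = 0"
      using loop_class_induced(2)[OF l1 hc] by simp
    have l2: "loop_in S (h \<circ> (p \<circ> r))" by (rule loop_class_induced(1)[OF l1 hc])
    have pg2: "path (h \<circ> (p \<circ> r))" "path_image (h \<circ> (p \<circ> r)) \<subseteq> S" using l2 by (auto simp: loop_in_def)
    have ps2: "pathstart (h \<circ> (p \<circ> r)) = p a" using r(3) pa by (simp add: pathstart_compose)
    obtain q where q: "path q" "path_image q \<subseteq> X" "pathstart q = a"
      and pq: "\<And>t. t \<in> {0..1} \<Longrightarrow> p (q t) = (h \<circ> (p \<circ> r)) t"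
      by (rule covering_space_lift_path_strong[OF cov a pg2 ps2]) blast
    have qc: "pathfinish q = pathstart q"
      using lift_propD[OF LP l2 q(1,2) pq] z2 by blast
    have "homotopic_paths S (h \<circ> (p \<circ> r)) (p \<circ> q)"
      by (rule homotopic_paths_eq[OF pg2]) (simp add: pq)
    then have "homotopic_paths S ((h \<circ> p) \<circ> r) (p \<circ> q)" by (simp add: o_assoc)
    then show ?thesis using q qc by auto
  qed
  obtain F where "continuous_on X F" "F \<in> X \<rightarrow> X" "F z = a" "\<And>y. y \<in> X \<Longrightarrow> p (F y) = (h \<circ> p) y"
    by (rule covering_space_lift_general[OF cov a z pc lpc contf fim feq hom]) blast+
  then show ?thesis using that by simp
qed

lemma lift_of_crit:
  fixes S :: "'a::euclidean_space set" and X :: "'b::euclidean_space set"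
  assumes cov: "covering_space X p S" and pc: "path_connected X" and lpc: "locally path_connected X"
    and LP: "lift_prop S X p \<phi>" and ne: "X \<noteq> {}"
    and hm: "homeomorphism S S h h'" and cr: "crit S \<phi> h" and cr': "crit S \<phi> h'"
  shows "lifts_through X p h"
proof -
  have hc: "continuous_on S h" "h ` S \<subseteq> S" "continuous_on S h'" "h' ` S \<subseteq> S"
    using hm by (auto simp: homeomorphism_def)
  have hh: "\<And>x. x \<in> S \<Longrightarrow> h' (h x) = x" using hm by (simp add: homeomorphism_def)
  have hh': "\<And>x. x \<in> S \<Longrightarrow> h (h' x) = x" using hm by (simp add: homeomorphism_def)
  have pX: "p ` X = S" by (rule covering_space_imp_surjective[OF cov])
  have pc': "continuous_on X p" by (rule covering_space_imp_continuous[OF cov])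
  obtain z where z: "z \<in> X" using ne by blast
  have pz: "p z \<in> S" using z pX by blast
  have "h (p z) \<in> p ` X" using pz hc(2) pX by blast
  then obtain a where a: "a \<in> X" "p a = h (p z)" by (metis imageE)
  obtain F where F: "continuous_on X F" "F \<in> X \<rightarrow> X" "F z = a" "\<And>y. y \<in> X \<Longrightarrow> p (F y) = h (p y)"
    by (rule one_lift[OF cov pc lpc LP hc(1,2) cr z a(1) a(2)]) blast
  have pa': "p z = h' (p a)" using a(2) hh pz by simp
  obtain G where G: "continuous_on X G" "G \<in> X \<rightarrow> X" "G a = z" "\<And>y. y \<in> X \<Longrightarrow> p (G y) = h' (p y)"
    by (rule one_lift[OF cov pc lpc LP hc(3,4) cr' a(1) z pa']) blast
  have FX: "F ` X \<subseteq> X" and GX: "G ` X \<subseteq> X" using F(2) G(2) by auto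
  have cX: "connected X" using pc by (rule path_connected_imp_connected)
  have pim: "p \<in> X \<rightarrow> S" using pX by auto
  have GF: "(G \<circ> F) x = id x" if x: "x \<in> X" for x
  proof (rule covering_space_lift_unique[OF cov _ pc' pim _ _ _ _ _ _ cX z x])
    show "(G \<circ> F) z = id z" using F(3) G(3) by simp
    show "continuous_on X (G \<circ> F)" using F(1) G(1) FX by (metis continuous_on_compose continuous_on_subset)
    show "G \<circ> F \<in> X \<rightarrow> X" using F(2) G(2) by auto
    show "\<And>x. x \<in> X \<Longrightarrow> p x = p ((G \<circ> F) x)"
    proof -
      fix y assume y: "y \<in> X"
      have "p y \<in> S" using y pX by blast
      have Fy: "F y \<in> X" using F(2) y by auto
      have "p ((G \<circ> F) y) = h' (h (p y))" using F(4)[OF y] G(4)[OF Fy] by simp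
      then show "p y = p ((G \<circ> F) y)" using hh[OF \<open>p y \<in> S\<close>] by simp
    qed
    show "continuous_on X id" by simp
    show "id \<in> X \<rightarrow> X" by simp
    show "\<And>x. x \<in> X \<Longrightarrow> p x = p (id x)" by simp
  qed
  have FG: "(F \<circ> G) x = id x" if x: "x \<in> X" for x
  proof (rule covering_space_lift_unique[OF cov _ pc' pim _ _ _ _ _ _ cX a(1) x])
    show "(F \<circ> G) a = id a" using F(3) G(3) by simp
    show "continuous_on X (F \<circ> G)" using F(1) G(1) GX by (metis continuous_on_compose continuous_on_subset)
    show "F \<circ> G \<in> X \<rightarrow> X" using F(2) G(2) by auto
    show "\<And>x. x \<in> X \<Longrightarrow> p x = p ((F \<circ> G) x)"
    proof -
      fix y assume y: "y \<in> X"
      have "p y \<in> S" using y pX by blast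
      have Gy: "G y \<in> X" using G(2) y by auto
      have "p ((F \<circ> G) y) = h (h' (p y))" using G(4)[OF y] F(4)[OF Gy] by simp
      then show "p y = p ((F \<circ> G) y)" using hh'[OF \<open>p y \<in> S\<close>] by simp
    qed
    show "continuous_on X id" by simp
    show "id \<in> X \<rightarrow> X" by simp
    show "\<And>x. x \<in> X \<Longrightarrow> p x = p (id x)" by simp
  qed
  have "homeomorphism X X F G"
    unfolding homeomorphism_def
  proof (intro conjI ballI)
    show "continuous_on X F" "continuous_on X G" by (fact F(1), fact G(1))
    show "\<And>x. x \<in> X \<Longrightarrow> G (F x) = x" using GF by simp
    show "\<And>y. y \<in> X \<Longrightarrow> F (G y) = y" using FG by simp
    show "F ` X = X"
    proof
      show "F ` X \<subseteq> X" by (fact FX)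
      show "X \<subseteq> F ` X"
      proof
        fix y assume y: "y \<in> X"
        then have "y = F (G y)" using FG by simp
        moreover have "G y \<in> X" using y G(2) by auto
        ultimately show "y \<in> F ` X" by blast
      qed
    qed
    show "G ` X = X"
    proof
      show "G ` X \<subseteq> X" by (fact GX)
      show "X \<subseteq> G ` X"
      proof
        fix y assume y: "y \<in> X"
        then have "y = G (F y)" using GF by simp
        moreover have "F y \<in> X" using y F(2) by auto
        ultimately show "y \<in> G ` X" by blast
      qed
    qed
  qed
  then show ?thesis
    unfolding lifts_through_def homeo_of_def using F(4) by blast
qed

lemma LMod_iff_crit:
  fixes S :: "'a::euclidean_space set" and X :: "'b::euclidean_space set"
  assumes scs: "standard_curve_system S g a b" and g: "g \<ge> 1" and m: "m \<ge> 2"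
    and cs: "closed_surface S"
    and cov: "covering_space X p S" and pc: "path_connected X"
    and cv: "cover_hom S g a b m \<phi>" and LP: "lift_prop S X p \<phi>"
    and f: "homeo_of S f"
  shows "in_LMod S X p f \<longleftrightarrow> crit S \<phi> f"
proof
  assume "in_LMod S X p f"
  then obtain h where h: "homeo_of S h" and iso: "isotopic S f h" and lt: "lifts_through X p h"
    unfolding in_LMod_def by blast
  obtain h' where hm: "homeomorphism S S h h'" using h unfolding homeo_of_def by blast
  have hc: "continuous_on S h" "h ` S \<subseteq> S" using hm by (auto simp: homeomorphism_def)
  have "crit S \<phi> h" by (rule crit_of_lift[OF scs cv m g cov LP hc lt])
  moreover have "hom_induced 1 (top_of_set S) {} (top_of_set S) {} f = hom_induced 1 (top_of_set S) {} (top_of_set S) {} h"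
    by (rule isotopic_hom_eq[OF iso])
  ultimately show "crit S \<phi> f" by (simp add: crit_def)
next
  assume cr: "crit S \<phi> f"
  obtain f' where hm: "homeomorphism S S f f'" using f unfolding homeo_of_def by blast
  have cr': "crit S \<phi> f'" by (rule crit_inv[OF scs cv m g hm cr])
  have "S \<noteq> {}" using cs by (simp add: closed_surface_def)
  then have ne: "X \<noteq> {}" using covering_space_imp_surjective[OF cov] by auto
  have lpc: "locally path_connected X"
    using covering_space_locally_path_connected_eq[OF cov] surface_lpc[OF cs] by simp
  have lt: "lifts_through X p f" by (rule lift_of_crit[OF cov pc lpc LP ne hm cr cr'])
  have fc: "continuous_on S f" using hm by (simp add: homeomorphism_def)
  have iso: "isotopic S f f"
    unfolding isotopic_def
  proof (rule exI[of _ "\<lambda>z. f (snd z)"], intro conjI ballI)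
    show "continuous_on ({0..1} \<times> S) (\<lambda>z. f (snd z))"
      by (rule continuous_on_compose2[OF fc continuous_on_snd]) auto
  qed (use f in auto)
  show "in_LMod S X p f" unfolding in_LMod_def using f iso lt by blast
qed

theorem corollary2p4:
  fixes S :: "'a::euclidean_space set"
    and a b :: "nat \<Rightarrow> real \<Rightarrow> 'a"
    and Xk :: "'b::euclidean_space set" and pk :: "'b \<Rightarrow> 'a"
    and Xl :: "'c::euclidean_space set" and pl :: "'c \<Rightarrow> 'a"
    and Xd :: "'e::euclidean_space set" and pd :: "'e \<Rightarrow> 'a"
    and f :: "'a \<Rightarrow> 'a"
    and g k l :: nat
  assumes "g \<ge> 1" and "k \<ge> 2" and "l \<ge> 2"
    and "orientable_closed_surface S"
    and "standard_curve_system S g a b"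
    and "is_cover_p S g a b k Xk pk"
    and "is_cover_p S g a b l Xl pl"
    and "is_cover_p S g a b (lcm k l) Xd pd"
    and "homeo_of S f" and "orientation_preserving S f"
  shows "(in_LMod S Xk pk f \<and> in_LMod S Xl pl f) \<longleftrightarrow> in_LMod S Xd pd f"
proof -
  note g = assms(1) and k = assms(2) and l = assms(3) and scs = assms(5) and f = assms(9)
  have cs: "closed_surface S" using assms(4) by (simp add: orientable_closed_surface_def)
  have d: "lcm k l \<ge> 2"
    using k l by (metis dvd_imp_le dvd_lcm1 lcm_pos_nat not_numeral_le_zero order.trans zero_less_iff_neq_zero le0)
  obtain \<phi>k where ck: "cover_hom S g a b k \<phi>k" and Lk: "lift_prop S Xk pk \<phi>k"
    and covk: "covering_space Xk pk S" and pck: "path_connected Xk"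
    using assms(6) unfolding is_cover_p_def lift_prop_def by blast
  obtain \<phi>l where cl: "cover_hom S g a b l \<phi>l" and Ll: "lift_prop S Xl pl \<phi>l"
    and covl: "covering_space Xl pl S" and pcl: "path_connected Xl"
    using assms(7) unfolding is_cover_p_def lift_prop_def by blast
  obtain \<phi>d where cd: "cover_hom S g a b (lcm k l) \<phi>d" and Ld: "lift_prop S Xd pd \<phi>d"
    and covd: "covering_space Xd pd S" and pcd: "path_connected Xd"
    using assms(8) unfolding is_cover_p_def lift_prop_def by blast
  have ek: "in_LMod S Xk pk f \<longleftrightarrow> crit S \<phi>k f" by (rule LMod_iff_crit[OF scs g k cs covk pck ck Lk f])
  have el: "in_LMod S Xl pl f \<longleftrightarrow> crit S \<phi>l f" by (rule LMod_iff_crit[OF scs g l cs covl pcl cl Ll f])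
  have ed: "in_LMod S Xd pd f \<longleftrightarrow> crit S \<phi>d f" by (rule LMod_iff_crit[OF scs g d cs covd pcd cd Ld f])
  have "crit S \<phi>k f \<and> crit S \<phi>l f \<longleftrightarrow> crit S \<phi>d f"
  proof
    assume "crit S \<phi>k f \<and> crit S \<phi>l f"
    then show "crit S \<phi>d f" using crit_up[OF scs ck cl cd k l] by blast
  next
    assume c: "crit S \<phi>d f"
    show "crit S \<phi>k f \<and> crit S \<phi>l f"
      using crit_down[OF scs ck cd _ k d g c] crit_down[OF scs cl cd _ l d g c] by simp
  qed
  then show ?thesis using ek el ed by simp
qed

end
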